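(* Let $(\breve N,\breve g,\breve P)$ be a Golden semi-Riemannian manifold. Then $\breve N$ admits no $1$-lightlike radical transversal lightlike submanifold. That is, there is no radical transversal lightlike submanifold $\acute N$ of $\breve N$ with $\operatorname{rank}(\mathrm{Rad}\,T\acute N)=1$.
   Context: A Golden semi-Riemannian manifold $(\breve N,\breve g,\breve P)$ is a semi-Riemannian manifold $(\breve N,\breve g)$ with a $(1,1)$-tensor field $\breve P$ such that $\breve P^2=\breve P+I$ and $\breve g(\breve PX,Y)=\breve g(X,\breve PY)$ for all vector fields $X,Y$. Equivalently, the second condition reads $\breve g(\breve PX,\breve PY)=\breve g(\breve PX,Y)+\breve g(X,Y)$. A lightlike submanifold $(\acute N,g,S(T\acute N),S(T\acute N^\perp))$ of $\breve N$ is an immersed submanifold whose induced metric $g$ is degenerate, with radical distribution $\mathrm{Rad}\,T\acute N=T\acute N\cap T\acute N^\perp$ of constant rank $r\ge1$. It comes with the following bundles: - a non-degenerate screen distribution $S(T\acute N)$, with $T\acute N=\mathrm{Rad}\,T\acute N\perp S(T\acute N)$; - a non-degenerate screen transversal bundle $S(T\acute N^\perp)$, which is a complement of $\mathrm{Rad}\,T\acute N$ in $T\acute N^\perp$; - a lightlike transversal bundle $ltr(T\acute N)$ of rank $r$. The bundle $ltr(T\acute N)$ is orthogonal to $S(T\acute N)$ and $S(T\acute N^\perp)$. For any local basis $\{\xi_i\}$ of $\mathrm{Rad}\,T\acute N$ it is locally spanned by $\{N_i\}$ with $\breve g(N_i,\xi_j)=\delta_{ij}$ and $\breve g(N_i,N_j)=0$.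 Thus $$T\breve N|_{\acute N}=S(T\acute N)\perp[\mathrm{Rad}\,T\acute N\oplus ltr(T\acute N)]\perp S(T\acute N^\perp).$$ Such a submanifold is called $r$-lightlike when $\operatorname{rank}\mathrm{Rad}\,T\acute N=r$. A lightlike submanifold is a radical transversal lightlike submanifold if $\breve P(\mathrm{Rad}\,T\acute N)=ltr(T\acute N)$ and $\breve P(S(T\acute N))=S(T\acute N)$. *)

theory Defs
  imports "HOL-Analysis.Analysis"
begin

(* Every tangent space of the ambient manifold is
   identified with a fixed finite-dimensional real vector space 'v; tensor fields
   are families indexed by points. Smoothness is not imposed. *)

definition gperp :: "('v \<Rightarrow> 'v \<Rightarrow> real) \<Rightarrow> 'v set \<Rightarrow> 'v set" where
  "gperp g W = {v. \<forall>w\<in>W. g v w = 0}"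

definition nondeg_on :: "('v::real_vector \<Rightarrow> 'v \<Rightarrow> real) \<Rightarrow> 'v set \<Rightarrow> bool" where
  "nondeg_on g W \<longleftrightarrow> (\<forall>v\<in>W. (\<forall>w\<in>W. g v w = 0) \<longrightarrow> v = 0)"

definition semi_riem_form :: "('v::real_vector \<Rightarrow> 'v \<Rightarrow> real) \<Rightarrow> bool" where
  "semi_riem_form g \<longleftrightarrow> (\<forall>x y. g x y = g y x) \<and> (\<forall>y. linear (\<lambda>x. g x y))
     \<and> nondeg_on g UNIV"

definition golden_at :: "('v::real_vector \<Rightarrow> 'v \<Rightarrow> real) \<Rightarrow> ('v \<Rightarrow> 'v) \<Rightarrow> bool" where
  "golden_at g P \<longleftrightarrow> semi_riem_form g \<and> linear P \<and> (\<forall>x. P (P x) = P x + x)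
     \<and> (\<forall>x y. g (P x) y = g x (P y))"

definition golden_semi_riemannian_manifold ::
  "'p set \<Rightarrow> ('p \<Rightarrow> 'v::real_vector \<Rightarrow> 'v \<Rightarrow> real) \<Rightarrow> ('p \<Rightarrow> 'v \<Rightarrow> 'v) \<Rightarrow> bool" where
  "golden_semi_riemannian_manifold M g P \<longleftrightarrow> (\<forall>p\<in>M. golden_at (g p) (P p))"

(* r-lightlike structure at one point: tangent space TN, radical Rad, screen Scr,
   screen transversal ScrTr, lightlike transversal Ltr *)
definition lightlike_at ::
  "('v::euclidean_space \<Rightarrow> 'v \<Rightarrow> real) \<Rightarrow> nat \<Rightarrow> 'v set \<Rightarrow> 'v set \<Rightarrow> 'v set \<Rightarrow> 'v set \<Rightarrow> 'v set \<Rightarrow> bool" where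
  "lightlike_at g r TN Rad Scr ScrTr Ltr \<longleftrightarrow>
     subspace TN \<and> Rad = TN \<inter> gperp g TN \<and> r \<ge> 1 \<and> dim Rad = r \<and>
     subspace Scr \<and> Scr \<subseteq> TN \<and> Rad \<inter> Scr = {0} \<and>
     TN = {a + b | a b. a \<in> Rad \<and> b \<in> Scr} \<and> Scr \<subseteq> gperp g Rad \<and> nondeg_on g Scr \<and>
     subspace ScrTr \<and> ScrTr \<subseteq> gperp g TN \<and> Rad \<inter> ScrTr = {0} \<and>
     gperp g TN = {a + b | a b. a \<in> Rad \<and> b \<in> ScrTr} \<and> nondeg_on g ScrTr \<and>
     subspace Ltr \<and> dim Ltr = r \<and> Ltr \<subseteq> gperp g Scr \<and> Ltr \<subseteq> gperp g ScrTr \<and>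
     (\<forall>\<xi>::nat \<Rightarrow> 'v. (inj_on \<xi> {..<r} \<and> independent (\<xi> ` {..<r}) \<and> span (\<xi> ` {..<r}) = Rad) \<longrightarrow>
        (\<exists>Nv::nat \<Rightarrow> 'v. span (Nv ` {..<r}) = Ltr \<and>
           (\<forall>i<r. \<forall>j<r. g (Nv i) (\<xi> j) = (if i = j then 1 else 0) \<and> g (Nv i) (Nv j) = 0))) \<and>
     UNIV = {a + b + c + d | a b c d. a \<in> Scr \<and> b \<in> Rad \<and> c \<in> Ltr \<and> d \<in> ScrTr}"

definition radical_transversal_at :: "('v \<Rightarrow> 'v) \<Rightarrow> 'v set \<Rightarrow> 'v set \<Rightarrow> 'v set \<Rightarrow> bool" where
  "radical_transversal_at P Rad Scr Ltr \<longleftrightarrow> P ` Rad = Ltr \<and> P ` Scr = Scr"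

definition radical_transversal_lightlike_submanifold ::
  "'p set \<Rightarrow> ('p \<Rightarrow> 'v::euclidean_space \<Rightarrow> 'v \<Rightarrow> real) \<Rightarrow> ('p \<Rightarrow> 'v \<Rightarrow> 'v) \<Rightarrow> nat \<Rightarrow>
   'q set \<Rightarrow> ('q \<Rightarrow> 'p) \<Rightarrow> ('q \<Rightarrow> 'v set) \<Rightarrow> ('q \<Rightarrow> 'v set) \<Rightarrow> ('q \<Rightarrow> 'v set) \<Rightarrow>
   ('q \<Rightarrow> 'v set) \<Rightarrow> ('q \<Rightarrow> 'v set) \<Rightarrow> bool" where
  "radical_transversal_lightlike_submanifold M g P r A f TN Rad Scr ScrTr Ltr \<longleftrightarrow>
     A \<noteq> {} \<and> f ` A \<subseteq> M \<and>
     (\<forall>q\<in>A. lightlike_at (g (f q)) r (TN q) (Rad q) (Scr q) (ScrTr q) (Ltr q) \<and>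
             radical_transversal_at (P (f q)) (Rad q) (Scr q) (Ltr q))"

end

theory Submission
  imports Defs
begin

lemma gperp_subspace:
  assumes "\<forall>y. linear (\<lambda>x. g x y)"
  shows "subspace (gperp g W)"
  unfolding subspace_def gperp_def
proof (intro conjI; clarsimp)
  fix w assume "w \<in> W" show "g 0 w = 0" using linear_0[OF spec[OF assms, of w]] by simp
next
  fix x y w assume "\<forall>w\<in>W. g x w = 0" "\<forall>w\<in>W. g y w = 0" "w \<in> W"
  then show "g (x + y) w = 0" using linear_add[OF spec[OF assms, of w], of x y] by simp
next
  fix c x w assume "\<forall>w\<in>W. g x w = 0" "w \<in> W"
  then show "g (c *\<^sub>R x) w = 0" using linear_scale[OF spec[OF assms, of w], of c x] by simp
qed

theorem mainTheorem1:
  fixes M :: "'p set" and g :: "'p \<Rightarrow> 'v::euclidean_space \<Rightarrow> 'v \<Rightarrow> real"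
    and P :: "'p \<Rightarrow> 'v \<Rightarrow> 'v"
  assumes "golden_semi_riemannian_manifold M g P"
  shows "\<not> (\<exists>(A :: 'q set) f TN Rad Scr ScrTr Ltr.
            radical_transversal_lightlike_submanifold M g P 1 A f TN Rad Scr ScrTr Ltr)"
proof
  assume "\<exists>(A :: 'q set) f TN Rad Scr ScrTr Ltr.
            radical_transversal_lightlike_submanifold M g P 1 A f TN Rad Scr ScrTr Ltr"
  then obtain A :: "'q set" and f TN Rad Scr ScrTr Ltr where
    H: "radical_transversal_lightlike_submanifold M g P 1 A f TN Rad Scr ScrTr Ltr" by blast
  then obtain q where q: "q \<in> A" "f q \<in> M"
    unfolding radical_transversal_lightlike_submanifold_def by blast
  define G where "G = g (f q)"
  define Q where "Q = P (f q)"
  have gold: "golden_at G Q" using assms q unfolding golden_semi_riemannian_manifold_def G_def Q_def by blast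
  have sym: "\<And>x y. G x y = G y x" and lin: "\<forall>y. linear (\<lambda>x. G x y)"
    and linQ: "linear Q" and QQ: "\<And>x. Q (Q x) = Q x + x" and adj: "\<And>x y. G (Q x) y = G x (Q y)"
    using gold unfolding golden_at_def semi_riem_form_def by auto
  have LL: "lightlike_at G 1 (TN q) (Rad q) (Scr q) (ScrTr q) (Ltr q)"
    and RT: "radical_transversal_at Q (Rad q) (Scr q) (Ltr q)"
    using H q unfolding radical_transversal_lightlike_submanifold_def G_def Q_def by auto
  have subTN: "subspace (TN q)" using LL unfolding lightlike_at_def by (elim conjE) assumption
  have RadEq: "Rad q = TN q \<inter> gperp G (TN q)" using LL unfolding lightlike_at_def by (elim conjE) assumption
  have dimR: "dim (Rad q) = 1" using LL unfolding lightlike_at_def by (elim conjE) assumption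
  have subR: "subspace (Rad q)" using RadEq subTN gperp_subspace[OF lin] subspace_inter by metis
  obtain B where B: "B \<subseteq> Rad q" "independent B" "Rad q \<subseteq> span B" "card B = dim (Rad q)"
    using basis_exists by blast
  have "card B = 1" using B(4) dimR by simp
  then obtain \<xi> where Bx: "B = {\<xi>}" by (rule card_1_singletonE)
  have spanR: "span {\<xi>} = Rad q"
    using B Bx subR span_minimal[of B "Rad q"] by blast
  have xiR: "\<xi> \<in> Rad q" using B Bx by auto
  have xi0: "\<xi> \<noteq> 0" using B Bx by auto
  have "\<exists>Nv::nat \<Rightarrow> 'v. span (Nv ` {..<1}) = Ltr q \<and>
           (\<forall>i<1. \<forall>j<1. G (Nv i) ((\<lambda>_. \<xi>) j) = (if i = j then 1 else 0) \<and> G (Nv i) (Nv j) = 0)"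
  proof -
    have "\<forall>\<xi>::nat \<Rightarrow> 'v. (inj_on \<xi> {..<1} \<and> independent (\<xi> ` {..<1}) \<and> span (\<xi> ` {..<1}) = Rad q) \<longrightarrow>
        (\<exists>Nv::nat \<Rightarrow> 'v. span (Nv ` {..<1}) = Ltr q \<and>
           (\<forall>i<1. \<forall>j<1. G (Nv i) (\<xi> j) = (if i = j then 1 else 0) \<and> G (Nv i) (Nv j) = 0))"
      using LL unfolding lightlike_at_def by (elim conjE) assumption
    moreover have "inj_on (\<lambda>_::nat. \<xi>) {..<1} \<and> independent ((\<lambda>_::nat. \<xi>) ` {..<1}) \<and> span ((\<lambda>_::nat. \<xi>) ` {..<1}) = Rad q"
      using B(1,2) Bx spanR by (simp add: lessThan_Suc)
    ultimately show ?thesis by blast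
  qed
  then obtain Nv :: "nat \<Rightarrow> 'v" where N: "span {Nv 0} = Ltr q" "G (Nv 0) \<xi> = 1" "G (Nv 0) (Nv 0) = 0"
    by (auto simp: lessThan_Suc)
  have "Q \<xi> \<in> Ltr q" using RT xiR unfolding radical_transversal_at_def by auto
  then obtain c where c: "Q \<xi> = c *\<^sub>R Nv 0" using N(1) span_singleton[of "Nv 0"] by blast
  have linG: "\<And>x y a. G (a *\<^sub>R x) y = a * G x y" by (simp add: linear_scale[OF spec[OF lin]])
  have linG2: "G x (a *\<^sub>R y) = a * G x y" for x y a
    using sym[of x "a *\<^sub>R y"] sym[of x y] linG[of a y x] by simp
  have addG2: "G x (y + z) = G x y + G x z" for x y z
    using sym[of x "y + z"] sym[of x y] sym[of x z] linear_add[OF spec[OF lin, of x], of y z] by simp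
  have xixi: "G \<xi> \<xi> = 0" using xiR RadEq unfolding gperp_def by auto
  have "G (Q \<xi>) (Q \<xi>) = 0" using c N linG linG2 by simp
  moreover have "G (Q \<xi>) (Q \<xi>) = G \<xi> (Q \<xi>) + G \<xi> \<xi>" by (simp add: adj QQ addG2)
  moreover have "G \<xi> (Q \<xi>) = c" using c N linG2 sym by simp
  ultimately have "c = 0" using xixi by simp
  then have "Q \<xi> = 0" using c by simp
  then have "\<xi> = 0" using QQ[of \<xi>] linQ by (simp add: linear_0)
  with xi0 show False by simp
qed

end
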